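(* Let $n\in\mathbb{Z}^+$ with $n\geq 2$, $l\in\{0,1\}$, $U\subset\mathbb{R}^{n-1}$ open, and $0<R_1<R_2<\infty$. Write points of $U\times(0,+\infty)$ as $y=(y_1,\dots,y_{n-1},y_n)$. Let $G\in C^l(U\times(0,+\infty))$ be real-valued and satisfy: (1) $G|_{U\times[R_1,R_2]}$ is real analytic on $U\times[R_1,R_2]$; (2) $\partial_n G=\frac{\partial G}{\partial y_n}\in C^l(U\times(0,+\infty))$. Then: (Statement 1) if moreover $G\equiv 0$ on $U\times(0,R_1]$, then $G\in C^{l+1}(U\times(0,R_2))$; (Statement 2) if moreover $G\equiv 0$ on $U\times[R_2,+\infty)$, then $G\in C^{l+1}(U\times(R_1,+\infty))$.
   Context: "$G|_{U\times[R_1,R_2]}$ is real analytic on $U\times[R_1,R_2]$" means: there exist $\delta_0\in(0,1)$ and a real analytic function $\widetilde G$ on $U\times(R_1(1-\delta_0),R_2(1+\delta_0))$ with $\widetilde G=G$ on $U\times[R_1,R_2]$. *)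

theory Defs
  imports "HOL-Analysis.Analysis"
begin

definition partial :: "('a::real_normed_vector \<Rightarrow> real) \<Rightarrow> 'a \<Rightarrow> 'a \<Rightarrow> real" where
  "partial f b x = deriv (\<lambda>t. f (x + t *\<^sub>R b)) 0"

fun Ck :: "nat \<Rightarrow> ('a::euclidean_space \<Rightarrow> real) \<Rightarrow> 'a set \<Rightarrow> bool" where
  "Ck 0 f S = continuous_on S f"
| "Ck (Suc k) f S =
     (continuous_on S f \<and>
      (\<forall>x\<in>S. \<forall>b\<in>Basis. (\<lambda>t. f (x + t *\<^sub>R b)) differentiable (at 0)) \<and>
      (\<forall>b\<in>Basis. Ck k (partial f b) S))"

definition multi_indices :: "('a::euclidean_space \<Rightarrow> nat) set" where
  "multi_indices = {\<alpha>. \<forall>b. b \<notin> Basis \<longrightarrow> \<alpha> b = 0}"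

definition monomial :: "('a::euclidean_space \<Rightarrow> nat) \<Rightarrow> 'a \<Rightarrow> real" where
  "monomial \<alpha> x = (\<Prod>b\<in>Basis. (x \<bullet> b) ^ \<alpha> b)"

definition real_analytic_on :: "('a::euclidean_space \<Rightarrow> real) \<Rightarrow> 'a set \<Rightarrow> bool" where
  "real_analytic_on f S \<longleftrightarrow>
     (\<forall>a\<in>S. \<exists>r>0. \<exists>c :: ('a \<Rightarrow> nat) \<Rightarrow> real.
        \<forall>x\<in>ball a r. ((\<lambda>\<alpha>. c \<alpha> * monomial \<alpha> (x - a)) has_sum f x) multi_indices)"

end

theory Submission imports Defs begin

definition deg :: "('v::euclidean_space \<Rightarrow> nat) \<Rightarrow> nat" where
  "deg \<alpha> = (\<Sum>b\<in>Basis. \<alpha> b)"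

definition pser :: "(nat \<Rightarrow> real) \<Rightarrow> (nat \<Rightarrow> 'v::euclidean_space \<Rightarrow> nat) \<Rightarrow> 'v \<Rightarrow> 'v \<Rightarrow> real" where
  "pser d \<mu> a x = (\<Sum>n. d n * monomial (\<mu> n) (x - a))"

definition REP :: "('v::euclidean_space \<Rightarrow> real) \<Rightarrow> 'v \<Rightarrow> (nat \<Rightarrow> real) \<Rightarrow> (nat \<Rightarrow> 'v \<Rightarrow> nat) \<Rightarrow> real \<Rightarrow> bool" where
  "REP f y d \<mu> \<rho> \<longleftrightarrow> 0 < \<rho> \<and> summable (\<lambda>n. \<bar>d n\<bar> * \<rho> ^ deg (\<mu> n)) \<and> (\<forall>x\<in>ball y \<rho>. f x = pser d \<mu> y x)"

lemma monomial_bound: "norm v \<le> r \<Longrightarrow> \<bar>monomial \<alpha> v\<bar> \<le> r ^ deg \<alpha>"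
  unfolding monomial_def deg_def power_sum abs_prod
proof (intro prod_mono conjI)
  fix i :: 'a assume "norm v \<le> r" "i \<in> Basis"
  then have "\<bar>v \<bullet> i\<bar> \<le> r" using Basis_le_norm order_trans by blast
  then show "\<bar>(v \<bullet> i) ^ \<alpha> i\<bar> \<le> r ^ \<alpha> i" unfolding power_abs by (intro power_mono) auto
qed auto

lemma kbound:
  assumes "0 < r1" "r1 < (r::real)"
  shows "\<exists>C\<ge>0. \<forall>k. real k * r1^(k-1) \<le> C * r^k"
proof -
  define q where "q = r1 / r"
  have q: "norm q < 1" "0 < q" using assms by (auto simp: q_def)
  have "(\<lambda>n. of_nat n * q ^ n) \<longlonglongrightarrow> 0" by (rule powser_times_n_limit_0[OF q(1)])
  then have "Bseq (\<lambda>n. of_nat n * q ^ n)" by (intro convergent_imp_Bseq convergentI)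
  then obtain B where B: "B > 0" "\<And>n. norm (of_nat n * q ^ n) \<le> B" by (auto elim: BseqE)
  show ?thesis
  proof (intro exI[of _ "B / r1"] conjI allI)
    show "0 \<le> B / r1" using B assms by simp
    fix k :: nat
    show "real k * r1^(k-1) \<le> B / r1 * r^k"
    proof (cases k)
      case 0 then show ?thesis using B assms by simp
    next
      case (Suc m)
      have "real k * r1^(k-1) = (real k * q ^ k) * r ^ k / r1"
        using assms Suc by (simp add: q_def power_divide field_simps)
      also have "\<dots> \<le> B * r ^ k / r1"
        using B(2)[of k] q assms by (intro divide_right_mono mult_right_mono) auto
      finally show ?thesis by simp
    qed
  qed
qed

lemma deg_upd: "b \<in> Basis \<Longrightarrow> deg (\<alpha>(b := m)) + \<alpha> b = deg \<alpha> + m"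
  unfolding deg_def
  by (simp add: sum.remove[of Basis b] sum.cong[of "Basis - {b}" _ "\<alpha>(b:=m)" \<alpha>])

lemma monomial_line:
  assumes "b \<in> Basis"
  shows "monomial \<alpha> (v + t *\<^sub>R b) = (v \<bullet> b + t) ^ (\<alpha> b) * (\<Prod>b'\<in>Basis-{b}. (v \<bullet> b') ^ (\<alpha> b'))"
proof -
  have "monomial \<alpha> (v + t *\<^sub>R b) = ((v + t *\<^sub>R b) \<bullet> b) ^ (\<alpha> b) * (\<Prod>b'\<in>Basis-{b}. ((v + t *\<^sub>R b) \<bullet> b') ^ (\<alpha> b'))"
    unfolding monomial_def using assms by (simp add: prod.remove)
  also have "(\<Prod>b'\<in>Basis-{b}. ((v + t *\<^sub>R b) \<bullet> b') ^ (\<alpha> b')) = (\<Prod>b'\<in>Basis-{b}. (v \<bullet> b') ^ (\<alpha> b'))"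
    using assms by (intro prod.cong) (auto simp: inner_add_left inner_Basis)
  finally show ?thesis using assms by (simp add: inner_add_left)
qed

lemma monomial_line_upd:
  assumes "b \<in> Basis"
  shows "monomial (\<alpha>(b:=m)) (v + t *\<^sub>R b) = (v \<bullet> b + t) ^ m * (\<Prod>b'\<in>Basis-{b}. (v \<bullet> b') ^ (\<alpha> b'))"
  unfolding monomial_line[OF assms] by (auto intro!: prod.cong)

lemma term_deriv:
  assumes "b \<in> Basis"
  shows "((\<lambda>t. c * monomial \<alpha> (v + t *\<^sub>R b)) has_real_derivative
           c * real (\<alpha> b) * monomial (\<alpha>(b := \<alpha> b - 1)) (v + t *\<^sub>R b)) (at t within S)"
proof -
  define P where "P = (\<Prod>b'\<in>Basis-{b}. (v \<bullet> b') ^ (\<alpha> b'))"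
  have "((\<lambda>t. c * ((v \<bullet> b + t) ^ (\<alpha> b) * P)) has_real_derivative
           c * (real (\<alpha> b) * (v \<bullet> b + t) ^ (\<alpha> b - 1) * P)) (at t within S)"
    by (auto intro!: derivative_eq_intros)
  then show ?thesis
    unfolding monomial_line[OF assms] monomial_line_upd[OF assms] P_def by (simp add: mult_ac)
qed

lemma REP_summ_deriv:
  assumes R: "REP f y d \<mu> \<rho>" and r1: "0 < \<rho>1" "\<rho>1 < \<rho>" and b: "b \<in> Basis"
  shows "summable (\<lambda>n. \<bar>d n * real (\<mu> n b)\<bar> * \<rho>1 ^ deg ((\<mu> n)(b := \<mu> n b - 1)))"
proof -
  obtain C where C: "C \<ge> 0" "\<And>k. real k * \<rho>1^(k-1) \<le> C * \<rho>^k" using kbound[OF r1] by blast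
  have s: "summable (\<lambda>n. \<bar>d n\<bar> * \<rho> ^ deg (\<mu> n))" using R by (simp add: REP_def)
  show ?thesis
  proof (rule summable_comparison_test'[OF summable_mult[OF s, of C], where N=0])
    fix n :: nat
    have le: "\<mu> n b \<le> deg (\<mu> n)" unfolding deg_def using b
      by (intro member_le_sum) auto
    have "real (\<mu> n b) * \<rho>1 ^ deg ((\<mu> n)(b := \<mu> n b - 1)) \<le> C * \<rho> ^ deg (\<mu> n)"
    proof (cases "\<mu> n b = 0")
      case True then show ?thesis using C r1 by simp
    next
      case False
      then have "deg ((\<mu> n)(b := \<mu> n b - 1)) = deg (\<mu> n) - 1" using deg_upd[OF b, of "\<mu> n" "\<mu> n b - 1"] by simp
      moreover have "real (\<mu> n b) * \<rho>1 ^ (deg (\<mu> n) - 1) \<le> real (deg (\<mu> n)) * \<rho>1 ^ (deg (\<mu> n) - 1)"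
        using le r1 by (intro mult_right_mono) auto
      ultimately show ?thesis using C(2)[of "deg (\<mu> n)"] by simp
    qed
    then have "\<bar>d n\<bar> * (real (\<mu> n b) * \<rho>1 ^ deg ((\<mu> n)(b := \<mu> n b - 1))) \<le> \<bar>d n\<bar> * (C * \<rho> ^ deg (\<mu> n))"
      by (intro mult_left_mono) auto
    moreover have "norm (\<bar>d n * real (\<mu> n b)\<bar> * \<rho>1 ^ deg ((\<mu> n)(b := \<mu> n b - 1))) = \<bar>d n\<bar> * (real (\<mu> n b) * \<rho>1 ^ deg ((\<mu> n)(b := \<mu> n b - 1)))"
      using r1 apply (simp add: abs_mult power_abs abs_of_pos) done
    moreover have "\<bar>d n\<bar> * (C * \<rho> ^ deg (\<mu> n)) = C * (\<bar>d n\<bar> * \<rho> ^ deg (\<mu> n))" by simp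
    ultimately show "norm (\<bar>d n * real (\<mu> n b)\<bar> * \<rho>1 ^ deg ((\<mu> n)(b := \<mu> n b - 1))) \<le> C * (\<bar>d n\<bar> * \<rho> ^ deg (\<mu> n))"
      by linarith
  qed
qed

lemma REP_summ_le:
  assumes R: "REP f y d \<mu> \<rho>" and "norm v \<le> \<rho>"
  shows "summable (\<lambda>n. d n * monomial (\<mu> n) v)"
proof (rule summable_comparison_test'[where N=0])
  show "summable (\<lambda>n. \<bar>d n\<bar> * \<rho> ^ deg (\<mu> n))" using R by (simp add: REP_def)
  fix n :: nat
  show "norm (d n * monomial (\<mu> n) v) \<le> \<bar>d n\<bar> * \<rho> ^ deg (\<mu> n)"
    using monomial_bound[OF assms(2), of "\<mu> n"] by (simp add: abs_mult mult_left_mono)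
qed

lemma REP_deriv:
  assumes R: "REP f y d \<mu> \<rho>" and r1: "0 < \<rho>1" "\<rho>1 < \<rho>" and b: "b \<in> Basis"
    and x: "x \<in> ball y \<rho>1"
  shows "((\<lambda>t. f (x + t *\<^sub>R b)) has_real_derivative
           pser (\<lambda>n. d n * real (\<mu> n b)) (\<lambda>n. (\<mu> n)(b := \<mu> n b - 1)) y x) (at 0)"
proof -
  define v where "v = x - y"
  define \<eta> where "\<eta> = \<rho>1 - norm v"
  have nv: "norm v < \<rho>1" using x by (simp add: v_def dist_norm norm_minus_commute)
  then have eta: "\<eta> > 0" by (simp add: \<eta>_def)
  define S where "S = ball (0::real) \<eta>"
  have bn: "norm b = 1" using b by simp
  have inS: "norm (v + t *\<^sub>R b) < \<rho>1" if "t \<in> S" for t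
  proof -
    have "norm (v + t *\<^sub>R b) \<le> norm v + \<bar>t\<bar>" using norm_triangle_ineq[of v "t *\<^sub>R b"] bn by simp
    also have "\<dots> < \<rho>1" using that by (simp add: S_def \<eta>_def)
    finally show ?thesis .
  qed
  define fn where "fn = (\<lambda>n t. d n * monomial (\<mu> n) (v + t *\<^sub>R b))"
  define fn' where "fn' = (\<lambda>n t. d n * real (\<mu> n b) * monomial ((\<mu> n)(b := \<mu> n b - 1)) (v + t *\<^sub>R b))"
  have der: "(fn n has_field_derivative fn' n t) (at t within S)" for n t
    unfolding fn_def fn'_def by (rule term_deriv[OF b])
  have uc: "uniformly_convergent_on S (\<lambda>n t. \<Sum>i<n. fn' i t)"
  proof (rule Weierstrass_m_test'[OF _ REP_summ_deriv[OF R r1 b]])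
    fix n t assume "t \<in> S"
    then have "\<bar>monomial ((\<mu> n)(b := \<mu> n b - 1)) (v + t *\<^sub>R b)\<bar> \<le> \<rho>1 ^ deg ((\<mu> n)(b := \<mu> n b - 1))"
      using inS by (intro monomial_bound) (simp add: less_imp_le)
    then show "norm (fn' n t) \<le> \<bar>d n * real (\<mu> n b)\<bar> * \<rho>1 ^ deg ((\<mu> n)(b := \<mu> n b - 1))"
      unfolding fn'_def by (simp add: abs_mult mult_left_mono)
  qed
  have s0: "summable (\<lambda>n. fn n 0)"
    unfolding fn_def using REP_summ_le[OF R, of v] nv r1 by simp
  have S0: "0 \<in> interior S" using eta by (simp add: S_def)
  have D: "((\<lambda>t. \<Sum>n. fn n t) has_field_derivative (\<Sum>n. fn' n 0)) (at 0)"
    using has_field_derivative_series'(2)[OF _ der uc _ s0 S0] S0 by (simp add: S_def)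
  have ev: "eventually (\<lambda>t. f (x + t *\<^sub>R b) = (\<Sum>n. fn n t)) (nhds 0)"
  proof -
    have "eventually (\<lambda>t. t \<in> S) (nhds 0)" using eta by (intro eventually_nhds_in_open) (auto simp: S_def)
    then show ?thesis
    proof (rule eventually_mono)
      fix t assume t: "t \<in> S"
      have "x + t *\<^sub>R b \<in> ball y \<rho>" using inS[OF t] r1
        by (simp add: v_def dist_norm norm_minus_commute algebra_simps)
      then have "f (x + t *\<^sub>R b) = pser d \<mu> y (x + t *\<^sub>R b)" using R by (simp add: REP_def)
      then show "f (x + t *\<^sub>R b) = (\<Sum>n. fn n t)"
        by (simp add: pser_def fn_def v_def algebra_simps)
    qed
  qed
  have "(\<Sum>n. fn' n 0) = pser (\<lambda>n. d n * real (\<mu> n b)) (\<lambda>n. (\<mu> n)(b := \<mu> n b - 1)) y x"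
    by (simp add: fn'_def pser_def v_def)
  then show ?thesis using D DERIV_cong_ev[OF refl ev refl] by simp
qed

lemma REP_partial:
  assumes R: "REP f y d \<mu> \<rho>" and r1: "0 < \<rho>1" "\<rho>1 < \<rho>" and b: "b \<in> Basis"
  shows "REP (partial f b) y (\<lambda>n. d n * real (\<mu> n b)) (\<lambda>n. (\<mu> n)(b := \<mu> n b - 1)) \<rho>1"
  unfolding REP_def
proof (intro conjI ballI)
  show "0 < \<rho>1" by fact
  show "summable (\<lambda>n. \<bar>d n * real (\<mu> n b)\<bar> * \<rho>1 ^ deg ((\<mu> n)(b := \<mu> n b - 1)))"
    by (rule REP_summ_deriv[OF R r1 b])
  fix x assume "x \<in> ball y \<rho>1"
  from DERIV_imp_deriv[OF REP_deriv[OF R r1 b this]]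
  show "partial f b x = pser (\<lambda>n. d n * real (\<mu> n b)) (\<lambda>n. (\<mu> n)(b := \<mu> n b - 1)) y x"
    by (simp add: partial_def)
qed

lemma REP_cont:
  assumes R: "REP f y d \<mu> \<rho>"
  shows "continuous_on (ball y \<rho>) f"
proof (rule continuous_at_imp_continuous_on, intro ballI)
  fix x assume x: "x \<in> ball y \<rho>"
  define \<rho>1 where "\<rho>1 = (dist y x + \<rho>) / 2"
  have r1: "dist y x < \<rho>1" "\<rho>1 < \<rho>" "0 < \<rho>1" proof -
    have "0 \<le> dist y x" "dist y x < \<rho>" using x by auto
    then have "0 < \<rho>" by linarith
    with \<open>dist y x < \<rho>\<close> show "dist y x < \<rho>1" "\<rho>1 < \<rho>" "0 < \<rho>1" unfolding \<rho>1_def by (auto intro: add_nonneg_pos)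
  qed
  have s: "summable (\<lambda>n. \<bar>d n\<bar> * \<rho> ^ deg (\<mu> n))" using R by (simp add: REP_def)
  have ul: "uniform_limit (ball y \<rho>1) (\<lambda>n z. \<Sum>i<n. d i * monomial (\<mu> i) (z - y)) (\<lambda>z. \<Sum>i. d i * monomial (\<mu> i) (z - y)) sequentially"
  proof (rule Weierstrass_m_test[OF _ s])
    fix n z assume "z \<in> ball y \<rho>1"
    then have "norm (z - y) \<le> \<rho>" using r1 by (simp add: dist_norm norm_minus_commute)
    from monomial_bound[OF this, of "\<mu> n"]
    show "norm (d n * monomial (\<mu> n) (z - y)) \<le> \<bar>d n\<bar> * \<rho> ^ deg (\<mu> n)"
      by (simp add: abs_mult mult_left_mono)
  qed
  have "continuous_on (ball y \<rho>1) (\<lambda>z. \<Sum>i. d i * monomial (\<mu> i) (z - y))"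
    by (rule uniform_limit_theorem[OF _ ul]) (auto simp: monomial_def intro!: continuous_intros always_eventually)
  then have c: "isCont (pser d \<mu> y) x"
    using r1 continuous_on_eq_continuous_at[of "ball y \<rho>1"] unfolding pser_def[abs_def] by (metis mem_ball open_ball)
  have "eventually (\<lambda>z. f z = pser d \<mu> y z) (nhds x)"
  proof -
    have "eventually (\<lambda>z. z \<in> ball y \<rho>) (nhds x)" using x by (intro eventually_nhds_in_open) auto
    then show ?thesis by eventually_elim (use R in \<open>auto simp: REP_def\<close>)
  qed
  then show "isCont f x" using c isCont_cong by blast
qed

definition ANon :: "('v::euclidean_space \<Rightarrow> real) \<Rightarrow> 'v set \<Rightarrow> bool" where
  "ANon f T \<longleftrightarrow> (\<forall>y\<in>T. \<exists>d \<mu> \<rho>. REP f y d \<mu> \<rho>)"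

lemma ANon_partial:
  assumes "ANon f T" "b \<in> Basis"
  shows "ANon (partial f b) T"
  unfolding ANon_def
proof
  fix y assume "y \<in> T"
  then obtain d \<mu> \<rho> where R: "REP f y d \<mu> \<rho>" using assms by (auto simp: ANon_def)
  then have "\<rho> > 0" by (simp add: REP_def)
  then show "\<exists>d \<mu> \<rho>. REP (partial f b) y d \<mu> \<rho>"
    using REP_partial[OF R _ _ assms(2), of "\<rho>/2"] by auto
qed

lemma ANon_cont:
  assumes "ANon f T"
  shows "continuous_on T f"
proof (rule continuous_at_imp_continuous_on, intro ballI)
  fix y assume "y \<in> T"
  then obtain d \<mu> \<rho> where R: "REP f y d \<mu> \<rho>" using assms by (auto simp: ANon_def)
  then have "\<rho> > 0" by (simp add: REP_def)
  then show "isCont f y" using REP_cont[OF R] continuous_on_eq_continuous_at[of "ball y \<rho>" f] by auto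
qed

lemma ANon_diff:
  assumes "ANon f T" "y \<in> T" "b \<in> Basis"
  shows "(\<lambda>t. f (y + t *\<^sub>R b)) differentiable (at 0)"
proof -
  obtain d \<mu> \<rho> where R: "REP f y d \<mu> \<rho>" using assms by (auto simp: ANon_def)
  then have "\<rho> > 0" by (simp add: REP_def)
  then show ?thesis using REP_deriv[OF R _ _ assms(3), of "\<rho>/2" y]
    using real_differentiable_def by (auto intro: differentiableI)
qed

lemma ANon_Ck: "ANon f T \<Longrightarrow> Ck k f T"
proof (induction k arbitrary: f)
  case 0 then show ?case by (simp add: ANon_cont)
next
  case (Suc k) then show ?case by (simp add: ANon_cont ANon_diff ANon_partial)
qed

lemma REP_sym:
  assumes R: "REP f y d \<mu> \<rho>" and b: "b \<in> Basis" and c: "c \<in> Basis"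
  shows "partial (partial f b) c y = partial (partial f c) b y"
proof -
  have r: "\<rho> > 0" using R by (simp add: REP_def)
  have R1: "REP (partial (partial f b) c) y
     (\<lambda>n. d n * real (\<mu> n b) * real (((\<mu> n)(b := \<mu> n b - 1)) c))
     (\<lambda>n. ((\<mu> n)(b := \<mu> n b - 1))(c := ((\<mu> n)(b := \<mu> n b - 1)) c - 1)) (\<rho>/4)"
    by (rule REP_partial[OF REP_partial[OF R _ _ b, of "\<rho>/2"] _ _ c]) (use r in auto)
  have R2: "REP (partial (partial f c) b) y
     (\<lambda>n. d n * real (\<mu> n c) * real (((\<mu> n)(c := \<mu> n c - 1)) b))
     (\<lambda>n. ((\<mu> n)(c := \<mu> n c - 1))(b := ((\<mu> n)(c := \<mu> n c - 1)) b - 1)) (\<rho>/4)"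
    by (rule REP_partial[OF REP_partial[OF R _ _ c, of "\<rho>/2"] _ _ b]) (use r in auto)
  have e1: "(\<lambda>n. d n * real (\<mu> n b) * real (((\<mu> n)(b := \<mu> n b - 1)) c)) =
            (\<lambda>n. d n * real (\<mu> n c) * real (((\<mu> n)(c := \<mu> n c - 1)) b))"
    by (cases "b = c") auto
  have e2: "(\<lambda>n. ((\<mu> n)(b := \<mu> n b - 1))(c := ((\<mu> n)(b := \<mu> n b - 1)) c - 1)) =
            (\<lambda>n. ((\<mu> n)(c := \<mu> n c - 1))(b := ((\<mu> n)(c := \<mu> n c - 1)) b - 1))"
    by (cases "b = c") (auto simp: fun_upd_twist)
  have "y \<in> ball y (\<rho>/4)" using r by simp
  then show ?thesis using R1 R2 e1 e2 by (simp add: REP_def)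
qed

lemma ANon_sym:
  assumes "ANon f T" "y \<in> T" "b \<in> Basis" "c \<in> Basis"
  shows "partial (partial f b) c y = partial (partial f c) b y"
  using assms REP_sym by (metis ANon_def)

lemma MI_countable: "countable (multi_indices :: ('v::euclidean_space \<Rightarrow> nat) set)"
proof -
  define g where "g = (\<lambda>(h::'v \<Rightarrow> nat) b. if b \<in> Basis then h b else 0)"
  have "(multi_indices :: ('v \<Rightarrow> nat) set) \<subseteq> g ` (Basis \<rightarrow>\<^sub>E (UNIV :: nat set))"
  proof
    fix \<alpha> :: "'v \<Rightarrow> nat" assume a: "\<alpha> \<in> multi_indices"
    have "\<alpha> = g (restrict \<alpha> Basis)"
    proof (rule ext)
      fix b show "\<alpha> b = g (restrict \<alpha> Basis) b"
        using a unfolding g_def multi_indices_def by (cases "b \<in> Basis") simp_all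
    qed
    moreover have "restrict \<alpha> Basis \<in> Basis \<rightarrow>\<^sub>E UNIV" by simp
    ultimately show "\<alpha> \<in> g ` (Basis \<rightarrow>\<^sub>E (UNIV :: nat set))"
      by (rule image_eqI)
  qed
  moreover have "countable (Basis \<rightarrow>\<^sub>E (UNIV :: nat set))"
    by (rule countable_PiE) simp_all
  ultimately show ?thesis by (rule countable_subset[OF _ countable_image])
qed

lemma MI_infinite: "infinite (multi_indices :: ('v::euclidean_space \<Rightarrow> nat) set)"
proof -
  obtain b0 :: 'v where b0: "b0 \<in> Basis" using nonempty_Basis by blast
  define h where "h = (\<lambda>n::nat. (\<lambda>b. if b = b0 then n else 0) :: 'v \<Rightarrow> nat)"
  have "inj h"
  proof (rule injI)
    fix m n assume "h m = h n"
    then have "h m b0 = h n b0" by simp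
    then show "m = n" by (simp add: h_def)
  qed
  then have "infinite (range h)" by (rule range_inj_infinite)
  moreover have "range h \<subseteq> multi_indices" using b0 by (auto simp: h_def multi_indices_def)
  ultimately show ?thesis using infinite_super by blast
qed

lemma analytic_ANon:
  assumes "real_analytic_on f S"
  shows "ANon f S"
  unfolding ANon_def
proof
  fix a assume "a \<in> S"
  then obtain r c where r: "r > 0" and hs: "\<And>x. x \<in> ball a r \<Longrightarrow> ((\<lambda>\<alpha>. c \<alpha> * monomial \<alpha> (x - a)) has_sum f x) multi_indices"
    using assms unfolding real_analytic_on_def by blast
  define e where "e = from_nat_into (multi_indices :: ('a \<Rightarrow> nat) set)"
  have bij: "bij_betw e UNIV multi_indices"
    unfolding e_def by (rule bij_betw_from_nat_into[OF MI_countable MI_infinite])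
  define \<rho> where "\<rho> = r / (2 * real DIM('a))"
  have rho: "\<rho> > 0" using r by (simp add: \<rho>_def)
  define z where "z = a + \<rho> *\<^sub>R (\<Sum>b\<in>Basis. b)"
  have sB: "(\<Sum>b\<in>(Basis::'a set). norm b) = real DIM('a)"
    by (simp add: norm_Basis cong: sum.cong)
  have nB: "norm (\<Sum>b\<in>(Basis::'a set). b) \<le> real DIM('a)"
    using norm_sum[of "\<lambda>b. b" "Basis :: 'a set"] unfolding sB .
  have "norm (z - a) = \<rho> * norm (\<Sum>b\<in>(Basis::'a set). b)"
    using rho by (simp add: z_def)
  also have "\<dots> \<le> \<rho> * real DIM('a)" using rho nB by (intro mult_left_mono) auto
  also have "\<dots> < r" using r by (simp add: \<rho>_def)
  finally have z: "z \<in> ball a r" by (simp add: dist_norm norm_minus_commute)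
  have mz: "monomial \<alpha> (z - a) = \<rho> ^ deg \<alpha>" for \<alpha>
  proof -
    have "(z - a) \<bullet> b = \<rho>" if "b \<in> Basis" for b
      using that by (simp add: z_def inner_sum_left inner_Basis)
    then show ?thesis unfolding monomial_def deg_def power_sum by (intro prod.cong) auto
  qed
  have "((\<lambda>\<alpha>. c \<alpha> * \<rho> ^ deg \<alpha>) has_sum f z) multi_indices"
    using hs[OF z] unfolding mz .
  then have "(\<lambda>\<alpha>. c \<alpha> * \<rho> ^ deg \<alpha>) summable_on multi_indices"
    unfolding summable_on_def by blast
  then have "(\<lambda>\<alpha>. norm (c \<alpha> * \<rho> ^ deg \<alpha>)) summable_on multi_indices"
    by (rule summable_on_iff_abs_summable_on_real[THEN iffD1])
  then have "(\<lambda>n. norm (c (e n) * \<rho> ^ deg (e n))) summable_on UNIV"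
    using summable_on_reindex_bij_betw[OF bij, of "\<lambda>\<alpha>. norm (c \<alpha> * \<rho> ^ deg \<alpha>)"] by simp
  then have "summable (\<lambda>n. norm (c (e n) * \<rho> ^ deg (e n)))"
    using summable_on_UNIV_nonneg_real_iff[of "\<lambda>n. norm (c (e n) * \<rho> ^ deg (e n))"] by simp
  then have sm: "summable (\<lambda>n. \<bar>c (e n)\<bar> * \<rho> ^ deg (e n))"
    using rho by (simp add: abs_mult power_abs abs_of_pos)
  have "f x = pser (\<lambda>n. c (e n)) e a x" if x: "x \<in> ball a \<rho>" for x
  proof -
    have "1 \<le> real DIM('a)" using DIM_positive[where 'a='a] by linarith
    then have D2: "1 \<le> 2 * real DIM('a)" by linarith
    have "r / (2 * real DIM('a)) \<le> r / 1" using r D2 by (intro divide_left_mono[OF D2]) auto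
    then have "\<rho> \<le> r" unfolding \<rho>_def by simp
    then have "x \<in> ball a r" using x by auto
    from hs[OF this] have "((\<lambda>n. c (e n) * monomial (e n) (x - a)) has_sum f x) UNIV"
      using has_sum_reindex_bij_betw[OF bij, of "\<lambda>\<alpha>. c \<alpha> * monomial \<alpha> (x - a)"] by simp
    then have "(\<lambda>n. c (e n) * monomial (e n) (x - a)) sums f x" by (rule has_sum_imp_sums)
    then show ?thesis by (simp add: pser_def sums_iff)
  qed
  then have "REP f a (\<lambda>n. c (e n)) e \<rho>" using rho sm by (simp add: REP_def)
  then show "\<exists>d \<mu> \<rho>. REP f a d \<mu> \<rho>" by blast
qed

lemma partial_zero: "partial (\<lambda>_. 0::real) b = (\<lambda>_. 0)"
  by (simp add: partial_def fun_eq_iff)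

lemma Ck_zero: "Ck k (\<lambda>_. 0::real) S"
  by (induction k) (auto simp: partial_zero)

lemma Ck_mono: "Ck k f S \<Longrightarrow> T \<subseteq> S \<Longrightarrow> Ck k f T"
  by (induction k arbitrary: f) (auto intro: continuous_on_subset)

lemma Ck_1: "Ck 1 f S \<longleftrightarrow> continuous_on S f \<and> (\<forall>x\<in>S. \<forall>b\<in>Basis. (\<lambda>t. f (x + t *\<^sub>R b)) differentiable (at 0)) \<and> (\<forall>b\<in>Basis. continuous_on S (partial f b))"
  by simp

lemma ev_line:
  fixes y b :: "'v::real_normed_vector"
  assumes "open N" "y \<in> N"
  shows "eventually (\<lambda>t::real. y + t *\<^sub>R b \<in> N) (nhds 0)"
proof -
  obtain \<epsilon> where e: "\<epsilon> > 0" "ball y \<epsilon> \<subseteq> N" using assms openE by blast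
  show ?thesis unfolding eventually_nhds_metric
  proof (intro exI[of _ "\<epsilon> / (norm b + 1)"] conjI allI impI)
    show "0 < \<epsilon> / (norm b + 1)" using e by (simp add: add_nonneg_pos)
    fix t :: real assume "dist t 0 < \<epsilon> / (norm b + 1)"
    then have t: "\<bar>t\<bar> < \<epsilon> / (norm b + 1)" by simp
    have pos: "0 < norm b + 1" by (simp add: add_nonneg_pos)
    from t have "\<bar>t\<bar> * (norm b + 1) < \<epsilon>" using pos by (simp only: less_divide_eq if_True)
    moreover have "\<bar>t\<bar> * norm b \<le> \<bar>t\<bar> * (norm b + 1)" by (intro mult_left_mono) auto
    ultimately have "\<bar>t\<bar> * norm b < \<epsilon>" by linarith
    then have "y + t *\<^sub>R b \<in> ball y \<epsilon>" by (simp add: dist_norm)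
    then show "y + t *\<^sub>R b \<in> N" using e by blast
  qed
qed

lemma partial_cong:
  assumes "eventually (\<lambda>t. f (y + t *\<^sub>R b) = g (y + t *\<^sub>R b)) (nhds 0)"
  shows "partial f b y = partial g b y"
  unfolding partial_def by (rule deriv_cong_ev[OF assms refl])

lemma diff_cong:
  fixes f g :: "'v::real_normed_vector \<Rightarrow> real"
  assumes "eventually (\<lambda>t. f (y + t *\<^sub>R b) = g (y + t *\<^sub>R b)) (nhds 0)"
    and "(\<lambda>t. f (y + t *\<^sub>R b)) differentiable (at 0)"
  shows "(\<lambda>t. g (y + t *\<^sub>R b)) differentiable (at 0)"
proof -
  have "((\<lambda>t. f (y + t *\<^sub>R b)) has_real_derivative deriv (\<lambda>t. f (y + t *\<^sub>R b)) 0) (at 0)"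
    using assms(2) DERIV_deriv_iff_real_differentiable by blast
  then have "((\<lambda>t. g (y + t *\<^sub>R b)) has_real_derivative deriv (\<lambda>t. f (y + t *\<^sub>R b)) 0) (at 0)"
    using DERIV_cong_ev[OF refl assms(1) refl] by blast
  then show ?thesis using real_differentiable_def by blast
qed

lemma deriv_agree:
  fixes f g :: "real \<Rightarrow> real"
  assumes "(f has_real_derivative D1) (at 0)" "(g has_real_derivative D2) (at 0)" "f 0 = g 0"
    and ev: "eventually (\<lambda>t. f t = g t) F" and F: "F \<le> at 0" "F \<noteq> bot"
  shows "D1 = D2"
proof -
  have t1: "((\<lambda>y. (f y - f 0) / (y - 0)) \<longlongrightarrow> D1) F"
    using assms(1) unfolding has_field_derivative_iff by (rule tendsto_mono[OF F(1)])
  have t2: "((\<lambda>y. (g y - g 0) / (y - 0)) \<longlongrightarrow> D2) F"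
    using assms(2) unfolding has_field_derivative_iff by (rule tendsto_mono[OF F(1)])
  have ev2: "eventually (\<lambda>y. (f y - f 0) / (y - 0) = (g y - g 0) / (y - 0)) F"
    using ev by eventually_elim (use assms(3) in simp)
  have t3: "((\<lambda>y. (g y - g 0) / (y - 0)) \<longlongrightarrow> D1) F"
    using t1 by (rule tendsto_cong[OF ev2, THEN iffD1])
  show ?thesis by (rule tendsto_unique[OF F(2) t3 t2])
qed

lemma deriv_glue:
  fixes f1 f2 g :: "real \<Rightarrow> real"
  assumes d1: "(f1 has_real_derivative D) (at 0)" and d2: "(f2 has_real_derivative D) (at 0)"
    and e1: "eventually (\<lambda>t. t \<le> 0 \<longrightarrow> g t = f1 t) (nhds 0)"
    and e2: "eventually (\<lambda>t. 0 \<le> t \<longrightarrow> g t = f2 t) (nhds 0)"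
  shows "(g has_real_derivative D) (at 0)"
proof -
  have g1: "g 0 = f1 0" using eventually_nhds_x_imp_x[OF e1] by simp
  have g2: "g 0 = f2 0" using eventually_nhds_x_imp_x[OF e2] by simp
  have L: "((\<lambda>y. (g y - g 0) / (y - 0)) \<longlongrightarrow> D) (at_left 0)"
  proof -
    have t: "((\<lambda>y. (f1 y - f1 0) / (y - 0)) \<longlongrightarrow> D) (at_left 0)"
      using d1 unfolding has_field_derivative_iff by (rule tendsto_mono[OF at_within_le_at])
    have ev: "eventually (\<lambda>y. (f1 y - f1 0) / (y - 0) = (g y - g 0) / (y - 0)) (at_left 0)"
      using e1 unfolding eventually_at_filter by eventually_elim (use g1 in auto)
    show ?thesis using t by (rule tendsto_cong[OF ev, THEN iffD1])
  qed
  have R: "((\<lambda>y. (g y - g 0) / (y - 0)) \<longlongrightarrow> D) (at_right 0)"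
  proof -
    have t: "((\<lambda>y. (f2 y - f2 0) / (y - 0)) \<longlongrightarrow> D) (at_right 0)"
      using d2 unfolding has_field_derivative_iff by (rule tendsto_mono[OF at_within_le_at])
    have ev: "eventually (\<lambda>y. (f2 y - f2 0) / (y - 0) = (g y - g 0) / (y - 0)) (at_right 0)"
      using e2 unfolding eventually_at_filter by eventually_elim (use g2 in auto)
    show ?thesis using t by (rule tendsto_cong[OF ev, THEN iffD1])
  qed
  have "((\<lambda>y. (g y - g 0) / (y - 0)) \<longlongrightarrow> D) (at 0)"
    unfolding at_eq_sup_left_right by (rule filterlim_sup[OF L R])
  then show ?thesis unfolding has_field_derivative_iff .
qed


lemma basis_horiz:
  assumes "b \<in> (Basis :: ('a::euclidean_space \<times> real) set)" "b \<noteq> (0,1)"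
  shows "snd b = 0"
  using assms by (auto simp: Basis_prod_def)

lemma glue:
  fixes K H1 H2 :: "'a::euclidean_space \<times> real \<Rightarrow> real"
  assumes W: "open W" and W1: "open W1" and W2: "open W2"
    and sub1a: "\<forall>y\<in>W. snd y \<le> R \<longrightarrow> y \<in> W1"
    and sub2a: "\<forall>y\<in>W. R \<le> snd y \<longrightarrow> y \<in> W2"
    and K1a: "\<forall>y\<in>W. snd y \<le> R \<longrightarrow> K y = H1 y"
    and K2a: "\<forall>y\<in>W. R \<le> snd y \<longrightarrow> K y = H2 y"
    and C1: "Ck 1 H1 W1" and C2: "Ck 1 H2 W2"
    and bda: "\<forall>y\<in>W. snd y = R \<longrightarrow> partial H1 (0,1) y = partial H2 (0,1) y"
  shows "Ck 1 K W"
    and "\<And>b y. b \<in> Basis \<Longrightarrow> y \<in> W \<Longrightarrow> snd y \<le> R \<Longrightarrow> partial K b y = partial H1 b y"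
    and "\<And>b y. b \<in> Basis \<Longrightarrow> y \<in> W \<Longrightarrow> R \<le> snd y \<Longrightarrow> partial K b y = partial H2 b y"
proof -
  have sub1: "\<And>y. y \<in> W \<Longrightarrow> snd y \<le> R \<Longrightarrow> y \<in> W1" using sub1a by blast
  have sub2: "\<And>y. y \<in> W \<Longrightarrow> R \<le> snd y \<Longrightarrow> y \<in> W2" using sub2a by blast
  have K1: "\<And>y. y \<in> W \<Longrightarrow> snd y \<le> R \<Longrightarrow> K y = H1 y" using K1a by blast
  have K2: "\<And>y. y \<in> W \<Longrightarrow> R \<le> snd y \<Longrightarrow> K y = H2 y" using K2a by blast
  have bd: "\<And>y. y \<in> W \<Longrightarrow> snd y = R \<Longrightarrow> partial H1 (0,1) y = partial H2 (0,1) y" using bda by blast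
  have H1c: "continuous_on W1 H1" using C1 unfolding Ck_1 by blast
  have H1d: "\<And>x b. x \<in> W1 \<Longrightarrow> b \<in> Basis \<Longrightarrow> (\<lambda>t. H1 (x + t *\<^sub>R b)) differentiable (at 0)"
    using C1 unfolding Ck_1 by blast
  have H1p: "\<And>b. b \<in> Basis \<Longrightarrow> continuous_on W1 (partial H1 b)" using C1 unfolding Ck_1 by blast
  have H2c: "continuous_on W2 H2" using C2 unfolding Ck_1 by blast
  have H2d: "\<And>x b. x \<in> W2 \<Longrightarrow> b \<in> Basis \<Longrightarrow> (\<lambda>t. H2 (x + t *\<^sub>R b)) differentiable (at 0)"
    using C2 unfolding Ck_1 by blast
  have H2p: "\<And>b. b \<in> Basis \<Longrightarrow> continuous_on W2 (partial H2 b)" using C2 unfolding Ck_1 by blast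
  have key: "(\<lambda>t. K (y + t *\<^sub>R b)) differentiable (at 0) \<and> (snd y \<le> R \<longrightarrow> partial K b y = partial H1 b y)
     \<and> (R \<le> snd y \<longrightarrow> partial K b y = partial H2 b y)" if y: "y \<in> W" and b: "b \<in> Basis" for y b
  proof (cases "snd y < R")
    case True
    let ?N = "W \<inter> (UNIV \<times> {..<R})"
    have "open ?N" using W by (intro open_Int open_Times) auto
    moreover have "y \<in> ?N" using y True by (cases y) auto
    ultimately have ev: "eventually (\<lambda>t. y + t *\<^sub>R b \<in> ?N) (nhds 0)" by (rule ev_line)
    have ev2: "eventually (\<lambda>t. H1 (y + t *\<^sub>R b) = K (y + t *\<^sub>R b)) (nhds 0)"
      using ev
    proof eventually_elim
      case (elim t)
      then have "y + t *\<^sub>R b \<in> W" "snd (y + t *\<^sub>R b) \<le> R" by (auto simp: mem_Times_iff)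
      then show ?case using K1 by metis
    qed
    have "(\<lambda>t. K (y + t *\<^sub>R b)) differentiable (at 0)"
      by (rule diff_cong[OF ev2 H1d[OF sub1[OF y] b]]) (use True in simp)
    moreover have "partial K b y = partial H1 b y" using partial_cong[OF ev2] by simp
    ultimately show ?thesis using True by auto
  next
    case False
    show ?thesis
    proof (cases "R < snd y")
      case True
      let ?N = "W \<inter> (UNIV \<times> {R<..})"
      have "open ?N" using W by (intro open_Int open_Times) auto
      moreover have "y \<in> ?N" using y True by (cases y) auto
      ultimately have ev: "eventually (\<lambda>t. y + t *\<^sub>R b \<in> ?N) (nhds 0)" by (rule ev_line)
      have ev2: "eventually (\<lambda>t. H2 (y + t *\<^sub>R b) = K (y + t *\<^sub>R b)) (nhds 0)"
        using ev
      proof eventually_elim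
        case (elim t)
        then have "y + t *\<^sub>R b \<in> W" "R \<le> snd (y + t *\<^sub>R b)" by (auto simp: mem_Times_iff)
        then show ?case using K2 by metis
      qed
      have "(\<lambda>t. K (y + t *\<^sub>R b)) differentiable (at 0)"
        by (rule diff_cong[OF ev2 H2d[OF sub2[OF y] b]]) (use True in simp)
      moreover have "partial K b y = partial H2 b y" using partial_cong[OF ev2] by simp
      ultimately show ?thesis using True by auto
    next
      case False2: False
      with False have yR: "snd y = R" by simp
      have ev: "eventually (\<lambda>t. y + t *\<^sub>R b \<in> W) (nhds 0)" by (rule ev_line[OF W y])
      show ?thesis
      proof (cases "b = (0,1)")
        case False
        have sb: "snd b = 0" by (rule basis_horiz[OF b False])
        have ev1: "eventually (\<lambda>t. H1 (y + t *\<^sub>R b) = K (y + t *\<^sub>R b)) (nhds 0)"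
          using ev
        proof eventually_elim
          case (elim t)
          then show ?case using K1[of "y + t *\<^sub>R b"] sb yR by simp
        qed
        have ev2: "eventually (\<lambda>t. H2 (y + t *\<^sub>R b) = K (y + t *\<^sub>R b)) (nhds 0)"
          using ev
        proof eventually_elim
          case (elim t)
          then show ?case using K2[of "y + t *\<^sub>R b"] sb yR by simp
        qed
        have "(\<lambda>t. K (y + t *\<^sub>R b)) differentiable (at 0)"
          by (rule diff_cong[OF ev1 H1d[OF sub1[OF y] b]]) (use yR in simp)
        moreover have "partial K b y = partial H1 b y" using partial_cong[OF ev1] by simp
        moreover have "partial K b y = partial H2 b y" using partial_cong[OF ev2] by simp
        ultimately show ?thesis by auto
      next
        case True
        have y1: "y \<in> W1" and y2: "y \<in> W2" using sub1[OF y] sub2[OF y] yR by auto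
        have d1: "((\<lambda>t. H1 (y + t *\<^sub>R b)) has_real_derivative partial H1 b y) (at 0)"
          using H1d[OF y1 b] unfolding partial_def DERIV_deriv_iff_real_differentiable[symmetric] .
        have d2: "((\<lambda>t. H2 (y + t *\<^sub>R b)) has_real_derivative partial H1 b y) (at 0)"
          using H2d[OF y2 b] bd[OF y yR] True unfolding partial_def DERIV_deriv_iff_real_differentiable[symmetric] by simp
        have e1: "eventually (\<lambda>t. t \<le> 0 \<longrightarrow> K (y + t *\<^sub>R b) = H1 (y + t *\<^sub>R b)) (nhds 0)"
          using ev
        proof eventually_elim
          case (elim t)
          then show ?case using K1[of "y + t *\<^sub>R b"] True yR by simp
        qed
        have e2: "eventually (\<lambda>t. 0 \<le> t \<longrightarrow> K (y + t *\<^sub>R b) = H2 (y + t *\<^sub>R b)) (nhds 0)"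
          using ev
        proof eventually_elim
          case (elim t)
          then show ?case using K2[of "y + t *\<^sub>R b"] True yR by simp
        qed
        have dK: "((\<lambda>t. K (y + t *\<^sub>R b)) has_real_derivative partial H1 b y) (at 0)"
          by (rule deriv_glue[OF d1 d2 e1 e2])
        then have "(\<lambda>t. K (y + t *\<^sub>R b)) differentiable (at 0)" using real_differentiable_def by blast
        moreover have "partial K b y = partial H1 b y" using DERIV_imp_deriv[OF dK] by (simp add: partial_def)
        ultimately show ?thesis using bd[OF y yR] True by auto
      qed
    qed
  qed
  show P1: "\<And>b y. b \<in> Basis \<Longrightarrow> y \<in> W \<Longrightarrow> snd y \<le> R \<Longrightarrow> partial K b y = partial H1 b y"
    using key by blast
  show P2: "\<And>b y. b \<in> Basis \<Longrightarrow> y \<in> W \<Longrightarrow> R \<le> snd y \<Longrightarrow> partial K b y = partial H2 b y"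
    using key by blast
  have cK: "continuous_on W K"
  proof -
    have "continuous_on W (\<lambda>y. if snd y \<le> R then H1 y else H2 y)"
    proof (rule continuous_on_cases_le)
      show "continuous_on {x \<in> W. snd x \<le> R} H1" by (rule continuous_on_subset[OF H1c]) (auto intro: sub1)
      show "continuous_on {x \<in> W. R \<le> snd x} H2" by (rule continuous_on_subset[OF H2c]) (auto intro: sub2)
      show "continuous_on W snd" by (intro continuous_intros)
      fix x assume "x \<in> W" "snd x = R"
      then show "H1 x = H2 x" using K1[of x] K2[of x] by simp
    qed
    then show ?thesis by (rule continuous_on_eq) (use K1 K2 in auto)
  qed
  have cP: "continuous_on W (partial K b)" if b: "b \<in> Basis" for b
  proof -
    have "continuous_on W (\<lambda>y. if snd y \<le> R then partial H1 b y else partial H2 b y)"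
    proof (rule continuous_on_cases_le)
      show "continuous_on {x \<in> W. snd x \<le> R} (partial H1 b)" by (rule continuous_on_subset[OF H1p[OF b]]) (auto intro: sub1)
      show "continuous_on {x \<in> W. R \<le> snd x} (partial H2 b)" by (rule continuous_on_subset[OF H2p[OF b]]) (auto intro: sub2)
      show "continuous_on W snd" by (intro continuous_intros)
      fix x assume "x \<in> W" "snd x = R"
      then show "partial H1 b x = partial H2 b x" using P1[OF b, of x] P2[OF b, of x] by simp
    qed
    then show ?thesis by (rule continuous_on_eq) (use P1[OF b] P2[OF b] in auto)
  qed
  show "Ck 1 K W" unfolding Ck_1 using cK cP key by blast
qed

lemma glue2:
  fixes K H1 H2 :: "'a::euclidean_space \<times> real \<Rightarrow> real"
  assumes W: "open W" and W1: "open W1" and W2: "open W2"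
    and sub1a: "\<forall>y\<in>W. snd y \<le> R \<longrightarrow> y \<in> W1"
    and sub2a: "\<forall>y\<in>W. R \<le> snd y \<longrightarrow> y \<in> W2"
    and K1a: "\<forall>y\<in>W. snd y \<le> R \<longrightarrow> K y = H1 y"
    and K2a: "\<forall>y\<in>W. R \<le> snd y \<longrightarrow> K y = H2 y"
    and C1: "Ck 2 H1 W1" and C2: "Ck 2 H2 W2"
    and bda: "\<forall>y\<in>W. snd y = R \<longrightarrow> partial H1 (0,1) y = partial H2 (0,1) y"
    and sym1a: "\<forall>y\<in>W. snd y = R \<longrightarrow> (\<forall>b\<in>Basis. partial (partial H1 b) (0,1) y = partial (partial H1 (0,1)) b y)"
    and sym2a: "\<forall>y\<in>W. snd y = R \<longrightarrow> (\<forall>b\<in>Basis. partial (partial H2 b) (0,1) y = partial (partial H2 (0,1)) b y)"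
    and Ke: "Ck 1 (partial K (0,1)) W"
  shows "Ck 2 K W"
proof -
  have sub1: "\<And>y. y \<in> W \<Longrightarrow> snd y \<le> R \<Longrightarrow> y \<in> W1" using sub1a by blast
  have sub2: "\<And>y. y \<in> W \<Longrightarrow> R \<le> snd y \<Longrightarrow> y \<in> W2" using sub2a by blast
  have K1: "\<And>y. y \<in> W \<Longrightarrow> snd y \<le> R \<Longrightarrow> K y = H1 y" using K1a by blast
  have K2: "\<And>y. y \<in> W \<Longrightarrow> R \<le> snd y \<Longrightarrow> K y = H2 y" using K2a by blast
  have bd: "\<And>y. y \<in> W \<Longrightarrow> snd y = R \<Longrightarrow> partial H1 (0,1) y = partial H2 (0,1) y" using bda by blast
  have sym1: "\<And>y b. y \<in> W \<Longrightarrow> snd y = R \<Longrightarrow> b \<in> Basis \<Longrightarrow> partial (partial H1 b) (0,1) y = partial (partial H1 (0,1)) b y" using sym1a by blast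
  have sym2: "\<And>y b. y \<in> W \<Longrightarrow> snd y = R \<Longrightarrow> b \<in> Basis \<Longrightarrow> partial (partial H2 b) (0,1) y = partial (partial H2 (0,1)) b y" using sym2a by blast
  have C1': "Ck 1 H1 W1" and C2': "Ck 1 H2 W2" and C1b: "\<And>b. b \<in> Basis \<Longrightarrow> Ck 1 (partial H1 b) W1"
    and C2b: "\<And>b. b \<in> Basis \<Longrightarrow> Ck 1 (partial H2 b) W2"
    using C1 C2 by (simp_all add: numeral_2_eq_2)
  note G = glue[OF W W1 W2 sub1a sub2a K1a K2a C1' C2' bda]
  have "Ck 1 (partial K b) W" if b: "b \<in> Basis" for b
  proof (cases "b = (0,1)")
    case True then show ?thesis using Ke by simp
  next
    case False
    have sb: "snd b = 0" by (rule basis_horiz[OF b False])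
    show ?thesis
    proof (rule glue(1)[OF W W1 W2 sub1a sub2a _ _ C1b[OF b] C2b[OF b]])
      show "\<forall>y\<in>W. snd y \<le> R \<longrightarrow> partial K b y = partial H1 b y" using G(2)[OF b] by blast
      show "\<forall>y\<in>W. R \<le> snd y \<longrightarrow> partial K b y = partial H2 b y" using G(3)[OF b] by blast
      show "\<forall>y\<in>W. snd y = R \<longrightarrow> partial (partial H1 b) (0,1) y = partial (partial H2 b) (0,1) y"
      proof (intro ballI impI)
      fix y assume y: "y \<in> W" and yR: "snd y = R"
      have ev: "eventually (\<lambda>t. y + t *\<^sub>R b \<in> W) (nhds 0)" by (rule ev_line[OF W y])
      have ev2: "eventually (\<lambda>t. partial H1 (0,1) (y + t *\<^sub>R b) = partial H2 (0,1) (y + t *\<^sub>R b)) (nhds 0)"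
        using ev
      proof eventually_elim
        case (elim t)
        then show ?case using bd[of "y + t *\<^sub>R b"] sb yR by simp
      qed
      have "partial (partial H1 b) (0,1) y = partial (partial H1 (0,1)) b y" by (rule sym1[OF y yR b])
      also have "\<dots> = partial (partial H2 (0,1)) b y" by (rule partial_cong[OF ev2])
      also have "\<dots> = partial (partial H2 b) (0,1) y" by (rule sym2[OF y yR b, symmetric])
      finally show "partial (partial H1 b) (0,1) y = partial (partial H2 b) (0,1) y" .
      qed
    qed
  qed
  then show ?thesis using G(1) by (simp add: numeral_2_eq_2)
qed

lemma vert_zero:
  fixes G Gt :: "'v::real_normed_vector \<Rightarrow> real"
  assumes dG: "(\<lambda>t. G (y + t *\<^sub>R e)) differentiable (at 0)"
    and dGt: "(\<lambda>t. Gt (y + t *\<^sub>R e)) differentiable (at 0)"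
    and z: "eventually (\<lambda>t. G (y + t *\<^sub>R e) = 0) Fa" "Fa \<le> at 0" "Fa \<noteq> bot" "G y = 0"
    and q: "eventually (\<lambda>t. G (y + t *\<^sub>R e) = Gt (y + t *\<^sub>R e)) Fb" "Fb \<le> at 0" "Fb \<noteq> bot" "G y = Gt y"
  shows "partial Gt e y = 0"
proof -
  have DG: "((\<lambda>t. G (y + t *\<^sub>R e)) has_real_derivative partial G e y) (at 0)"
    using dG unfolding partial_def DERIV_deriv_iff_real_differentiable[symmetric] .
  have DGt: "((\<lambda>t. Gt (y + t *\<^sub>R e)) has_real_derivative partial Gt e y) (at 0)"
    using dGt unfolding partial_def DERIV_deriv_iff_real_differentiable[symmetric] .
  have "partial G e y = 0"
    by (rule deriv_agree[OF DG DERIV_const _ z(1-3)]) (use z(4) in simp)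
  moreover have "partial G e y = partial Gt e y"
    by (rule deriv_agree[OF DG DGt _ q(1-3)]) (use q(4) in simp)
  ultimately show ?thesis by simp
qed


theorem lemma2p2:
  fixes G :: "'a::euclidean_space \<times> real \<Rightarrow> real"
    and U :: "'a set" and l :: nat and R1 R2 :: real
  assumes l: "l \<le> 1"
    and U: "open U"
    and R: "0 < R1" "R1 < R2"
    and G_C: "Ck l G (U \<times> {0<..})"
    and G_an: "\<exists>\<delta>0 \<in> {0<..<1}. \<exists>Gt :: 'a \<times> real \<Rightarrow> real.
                 real_analytic_on Gt (U \<times> {R1 * (1 - \<delta>0) <..< R2 * (1 + \<delta>0)}) \<and>
                 (\<forall>y \<in> U \<times> {R1..R2}. Gt y = G y)"
    and dG_ex: "\<forall>y \<in> U \<times> {0<..}. (\<lambda>t. G (y + t *\<^sub>R (0, 1))) differentiable (at 0)"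
    and dG_C: "Ck l (partial G (0, 1)) (U \<times> {0<..})"
  shows "((\<forall>y \<in> U \<times> {0<..R1}. G y = 0) \<longrightarrow> Ck (l + 1) G (U \<times> {0<..<R2})) \<and>
         ((\<forall>y \<in> U \<times> {R2..}. G y = 0) \<longrightarrow> Ck (l + 1) G (U \<times> {R1<..}))"
proof -
  obtain \<delta> Gt where \<delta>: "\<delta> \<in> {0<..<1}" and an: "real_analytic_on Gt (U \<times> {R1 * (1 - \<delta>) <..< R2 * (1 + \<delta>)})"
    and eq: "\<forall>y \<in> U \<times> {R1..R2}. Gt y = G y"
    using G_an by blast
  define T where "T = U \<times> {R1 * (1 - \<delta>) <..< R2 * (1 + \<delta>)}"
  have oT: "open T" unfolding T_def using U by (intro open_Times) auto
  have AT: "ANon Gt T" unfolding T_def by (rule analytic_ANon[OF an])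
  have Gt1: "Ck 1 Gt T" by (rule ANon_Ck[OF AT])
  have Gt2: "Ck 2 Gt T" by (rule ANon_Ck[OF AT])
  have eB: "((0::'a), (1::real)) \<in> Basis" by (simp add: Basis_prod_def)
  have Gtd: "(\<lambda>t. Gt (x + t *\<^sub>R (0,1))) differentiable (at 0)" if "x \<in> T" for x
    using ANon_diff[OF AT that eB] .
  have symT: "partial (partial Gt b) (0,1) y = partial (partial Gt (0,1)) b y" if "y \<in> T" "b \<in> Basis" for y b
    using ANon_sym[OF AT that(1) that(2) eB] .
  have "0 < R1 * \<delta>" using \<delta> R by simp
  then have lo: "R1 * (1 - \<delta>) < R1" by (simp add: algebra_simps)
  have "0 < R2 * \<delta>" using \<delta> R by simp
  then have hi: "R2 < R2 * (1 + \<delta>)" by (simp add: algebra_simps)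
  have dGe: "(\<lambda>t. G (y + t *\<^sub>R (0,1))) differentiable (at 0)" if "y \<in> U \<times> {0<..}" for y
    using dG_ex that by blast
  have l01: "l = 0 \<or> l = 1" using l by auto
  have line: "(x, s) + t *\<^sub>R ((0::'a), (1::real)) = (x, s + t)" for x s t by simp
  have lb: "at_left (0::real) \<le> at 0" "at_right (0::real) \<le> at 0" by (simp_all add: at_within_le_at)
  have nb: "at_left (0::real) \<noteq> bot" "at_right (0::real) \<noteq> bot" by simp_all
  show ?thesis
  proof (intro conjI impI)
    assume Z: "\<forall>y \<in> U \<times> {0<..R1}. G y = 0"
    define W where "W = U \<times> {0<..<R2}"
    have oW: "open W" unfolding W_def using U by (intro open_Times) auto
    have sub1a: "\<forall>y\<in>W. snd y \<le> R1 \<longrightarrow> y \<in> UNIV" by simp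
    have sub2a: "\<forall>y\<in>W. R1 \<le> snd y \<longrightarrow> y \<in> T"
    proof (intro ballI impI)
      fix y assume "y \<in> W" "R1 \<le> snd y"
      then show "y \<in> T" unfolding W_def T_def by (cases y) (auto intro: less_trans[OF _ hi] le_less_trans[OF _ hi] less_le_trans[OF lo] less_trans[OF lo])
    qed
    have K1a: "\<forall>y\<in>W. snd y \<le> R1 \<longrightarrow> G y = 0"
    proof (intro ballI impI)
      fix y assume "y \<in> W" "snd y \<le> R1"
      then have "y \<in> U \<times> {0<..R1}" unfolding W_def by (cases y) auto
      then show "G y = 0" using Z by blast
    qed
    have K2a: "\<forall>y\<in>W. R1 \<le> snd y \<longrightarrow> G y = Gt y"
    proof (intro ballI impI)
      fix y assume "y \<in> W" "R1 \<le> snd y"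
      then have "y \<in> U \<times> {R1..R2}" unfolding W_def by (cases y) auto
      then show "G y = Gt y" using eq by auto
    qed
    have bda: "\<forall>y\<in>W. snd y = R1 \<longrightarrow> partial (\<lambda>_. 0) (0,1) y = partial Gt (0,1) y"
    proof (intro ballI impI)
      fix y assume y: "y \<in> W" and yR: "snd y = R1"
      obtain x s where ys: "y = (x,s)" by (cases y)
      with y yR have x: "x \<in> U" and s: "s = R1" by (auto simp: W_def)
      have yT: "y \<in> T" using sub2a y yR by auto
      have "partial Gt (0,1) y = 0"
      proof (rule vert_zero[where G=G and Fa="at_left 0" and Fb="at_right 0", OF _ Gtd[OF yT] _ lb(1) nb(1) _ _ lb(2) nb(2)])
        show "(\<lambda>t. G (y + t *\<^sub>R (0,1))) differentiable (at 0)" using dGe[of y] x s R ys by auto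
        have evt: "eventually (\<lambda>t. t \<in> {-R1<..<0}) (at_left (0::real))" using R by (intro eventually_at_left_real) simp
        show "eventually (\<lambda>t. G (y + t *\<^sub>R (0,1)) = 0) (at_left 0)"
          using evt
        proof (rule eventually_mono)
          fix t assume "t \<in> {-R1<..<0}"
          then have "y + t *\<^sub>R (0,1) \<in> U \<times> {0<..R1}" using x s ys line by auto
          then show "G (y + t *\<^sub>R (0,1)) = 0" using Z by (auto simp del: mem_Times_iff)
        qed
        show "G y = 0" using Z x s R ys by auto
        have evt: "eventually (\<lambda>t. t \<in> {0<..<R2 - R1}) (at_right (0::real))" using R by (intro eventually_at_right_real) simp
        show "eventually (\<lambda>t. G (y + t *\<^sub>R (0,1)) = Gt (y + t *\<^sub>R (0,1))) (at_right 0)"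
          using evt
        proof (rule eventually_mono)
          fix t assume "t \<in> {0<..<R2 - R1}"
          then have "y + t *\<^sub>R (0,1) \<in> U \<times> {R1..R2}" using x s ys line by auto
          then show "G (y + t *\<^sub>R (0,1)) = Gt (y + t *\<^sub>R (0,1))" using eq by auto
        qed
        show "G y = Gt y" using eq x s R ys by auto
      qed
      then show "partial (\<lambda>_. 0) (0,1) y = partial Gt (0,1) y" by (simp add: partial_zero)
    qed
    note G1 = glue[OF oW open_UNIV oT sub1a sub2a K1a K2a Ck_zero Gt1 bda]
    show "Ck (l + 1) G (U \<times> {0<..<R2})"
    proof (cases "l = 0")
      case True then show ?thesis using G1(1) W_def by simp
    next
      case False
      then have l1: "l = 1" using l by simp
      have "Ck 2 G W"
      proof (rule glue2[OF oW open_UNIV oT sub1a sub2a K1a K2a Ck_zero Gt2 bda])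
        show "\<forall>y\<in>W. snd y = R1 \<longrightarrow> (\<forall>b\<in>Basis. partial (partial (\<lambda>_. 0) b) (0,1) y = partial (partial (\<lambda>_. 0) (0,1)) b y)"
          by (simp add: partial_zero)
        show "\<forall>y\<in>W. snd y = R1 \<longrightarrow> (\<forall>b\<in>Basis. partial (partial Gt b) (0,1) y = partial (partial Gt (0,1)) b y)"
          using symT sub2a by auto
        have "W \<subseteq> U \<times> {0<..}" unfolding W_def by auto
        then show "Ck 1 (partial G (0,1)) W" using dG_C l1 Ck_mono by blast
      qed
      then show ?thesis using l1 W_def by (simp add: numeral_2_eq_2)
    qed
  next
    assume Z: "\<forall>y \<in> U \<times> {R2..}. G y = 0"
    define W where "W = U \<times> {R1<..}"
    have oW: "open W" unfolding W_def using U by (intro open_Times) auto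
    have sub2a: "\<forall>y\<in>W. R2 \<le> snd y \<longrightarrow> y \<in> UNIV" by simp
    have sub1a: "\<forall>y\<in>W. snd y \<le> R2 \<longrightarrow> y \<in> T"
    proof (intro ballI impI)
      fix y assume "y \<in> W" "snd y \<le> R2"
      then show "y \<in> T" unfolding W_def T_def by (cases y) (auto intro: less_trans[OF _ hi] le_less_trans[OF _ hi] less_le_trans[OF lo] less_trans[OF lo])
    qed
    have K2a: "\<forall>y\<in>W. R2 \<le> snd y \<longrightarrow> G y = 0"
    proof (intro ballI impI)
      fix y assume "y \<in> W" "R2 \<le> snd y"
      then have "y \<in> U \<times> {R2..}" unfolding W_def by (cases y) auto
      then show "G y = 0" using Z by blast
    qed
    have K1a: "\<forall>y\<in>W. snd y \<le> R2 \<longrightarrow> G y = Gt y"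
    proof (intro ballI impI)
      fix y assume "y \<in> W" "snd y \<le> R2"
      then have "y \<in> U \<times> {R1..R2}" unfolding W_def by (cases y) auto
      then show "G y = Gt y" using eq by auto
    qed
    have bda: "\<forall>y\<in>W. snd y = R2 \<longrightarrow> partial Gt (0,1) y = partial (\<lambda>_. 0) (0,1) y"
    proof (intro ballI impI)
      fix y assume y: "y \<in> W" and yR: "snd y = R2"
      obtain x s where ys: "y = (x,s)" by (cases y)
      with y yR have x: "x \<in> U" and s: "s = R2" by (auto simp: W_def)
      have yT: "y \<in> T" using sub1a y yR by auto
      have "partial Gt (0,1) y = 0"
      proof (rule vert_zero[where G=G and Fa="at_right 0" and Fb="at_left 0", OF _ Gtd[OF yT] _ lb(2) nb(2) _ _ lb(1) nb(1)])
        show "(\<lambda>t. G (y + t *\<^sub>R (0,1))) differentiable (at 0)" using dGe[of y] x s R ys by auto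
        have evt: "eventually (\<lambda>t. t \<in> {0<..<1::real}) (at_right (0::real))" using R by (intro eventually_at_right_real) simp
        show "eventually (\<lambda>t. G (y + t *\<^sub>R (0,1)) = 0) (at_right 0)"
          using evt
        proof (rule eventually_mono)
          fix t assume "t \<in> {0<..<1::real}"
          then have "y + t *\<^sub>R (0,1) \<in> U \<times> {R2..}" using x s ys line by auto
          then show "G (y + t *\<^sub>R (0,1)) = 0" using Z by (auto simp del: mem_Times_iff)
        qed
        show "G y = 0" using Z x s R ys by auto
        have evt: "eventually (\<lambda>t. t \<in> {R1 - R2<..<0}) (at_left (0::real))" using R by (intro eventually_at_left_real) simp
        show "eventually (\<lambda>t. G (y + t *\<^sub>R (0,1)) = Gt (y + t *\<^sub>R (0,1))) (at_left 0)"
          using evt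
        proof (rule eventually_mono)
          fix t assume "t \<in> {R1 - R2<..<0}"
          then have "y + t *\<^sub>R (0,1) \<in> U \<times> {R1..R2}" using x s ys line by auto
          then show "G (y + t *\<^sub>R (0,1)) = Gt (y + t *\<^sub>R (0,1))" using eq by auto
        qed
        show "G y = Gt y" using eq x s R ys by auto
      qed
      then show "partial Gt (0,1) y = partial (\<lambda>_. 0) (0,1) y" by (simp add: partial_zero)
    qed
    note G1 = glue[OF oW oT open_UNIV sub1a sub2a K1a K2a Gt1 Ck_zero bda]
    show "Ck (l + 1) G (U \<times> {R1<..})"
    proof (cases "l = 0")
      case True then show ?thesis using G1(1) W_def by simp
    next
      case False
      then have l1: "l = 1" using l by simp
      have "Ck 2 G W"
      proof (rule glue2[OF oW oT open_UNIV sub1a sub2a K1a K2a Gt2 Ck_zero bda])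
        show "\<forall>y\<in>W. snd y = R2 \<longrightarrow> (\<forall>b\<in>Basis. partial (partial (\<lambda>_. 0) b) (0,1) y = partial (partial (\<lambda>_. 0) (0,1)) b y)"
          by (simp add: partial_zero)
        show "\<forall>y\<in>W. snd y = R2 \<longrightarrow> (\<forall>b\<in>Basis. partial (partial Gt b) (0,1) y = partial (partial Gt (0,1)) b y)"
          using symT sub1a by auto
        have "W \<subseteq> U \<times> {0<..}" unfolding W_def using R by auto
        then show "Ck 1 (partial G (0,1)) W" using dG_C l1 Ck_mono by blast
      qed
      then show ?thesis using l1 W_def by (simp add: numeral_2_eq_2)
    qed
  qed
qed

end
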